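(* Let $T\in\{0,1\}$ and $\hat Y\in\{0,1\}$ be binary random variables on a common probability space, where $T$ is the treatment (intervention) variable and $\hat Y$ is the indicator outcome defined below, and suppose $\mathbb{P}(T=1)=\mathbb{P}(T=0)=\tfrac12$ and all conditional probabilities and denominators below are well defined (nonzero conditioning events). Assume $\hat Y$ is monotonic with respect to $T$. Define $$\delta_{\mathrm{ADCE}} := \mathbb{P}(\hat Y=1\mid T=1, s(T=1)) - \mathbb{P}(\hat Y=1\mid T=0, s(T=0)),$$ $$\delta_{\mathrm{PN}} := \frac{\mathbb{P}(\hat Y=0)-\mathbb{P}(\hat Y=0\mid \mathrm{do}(T=1))}{\mathbb{P}(T=0,\hat Y=0)},\qquad \delta_{\mathrm{PS}} := \frac{\mathbb{P}(\hat Y=0\mid \mathrm{do}(T=0))-\mathbb{P}(\hat Y=0)}{\mathbb{P}(T=1,\hat Y=1)},$$ and set $\alpha:=\mathbb{P}(\hat Y=1\mid T=1,s(T=1))$ and $\beta:=\mathbb{P}(\hat Y=0\mid T=0,s(T=0))$. Then $$\delta_{\mathrm{ADCE}} = \frac{\alpha}{2}\,\delta_{\mathrm{PS}} + \frac{\beta}{2}\,\delta_{\mathrm{PN}}.$$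
   Context: Setting: an input question $x$ to a language model is decomposed into a deep structure $d$ (core semantics) and a surface structure $s$ (presentation form); the model output is $Y(x)$, and $Y^{\mathrm{origin}}$ denotes the output on the unintervened input. The treatment $T$ is an intervention on the input: $T=0$ means the intervention alters the surface structure $s$ but preserves the deep structure $d$; $T=1$ means the intervention alters both $s$ and $d$. $s(T=t)$ denotes the value the surface structure takes under treatment $T=t$; it is determined by $T$ (the event $T=t$ entails the surface structure $s(T=t)$). The outcome is $\hat Y = 1$ if the model's output after intervention differs from $Y^{\mathrm{origin}}$ and $\hat Y=0$ if it equals it. There is no confounding between $T$ and $\hat Y$, so $\mathbb{P}(\hat Y=y\mid \mathrm{do}(T=t))=\mathbb{P}(\hat Y=y\mid T=t)$. Monotonicity of $\hat Y$ in $T$ is the standard condition (Tian–Pearl) under which the probability of necessity $\mathrm{PN}=\mathbb{P}(\hat Y'_{T'}\mid T,\hat Y)$ and probability of sufficiency $\mathrm{PS}$ are identified by the displayed formulas; here $\delta_{\mathrm{PN}},\delta_{\mathrm{PS}}$ are evaluated at $(T=0,\hat Y=0)$. *)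

theory Defs
  imports "HOL-Probability.Probability"
begin

definition ev :: "'a measure \<Rightarrow> ('a \<Rightarrow> bool) \<Rightarrow> 'a set" where
  "ev M P = {\<omega> \<in> space M. P \<omega>}"

definition cprob :: "'a measure \<Rightarrow> ('a \<Rightarrow> bool) \<Rightarrow> ('a \<Rightarrow> bool) \<Rightarrow> real" where
  "cprob M A B = measure M (ev M (\<lambda>\<omega>. A \<omega> \<and> B \<omega>)) / measure M (ev M B)"

text \<open>Interventional probability P(Yhat = y | do(T = t)), via potential outcomes
  Y0 (outcome under T=0) and Y1 (outcome under T=1): P(Y_t = y).\<close>
definition do_prob :: "'a measure \<Rightarrow> ('a \<Rightarrow> bool) \<Rightarrow> ('a \<Rightarrow> bool) \<Rightarrow> bool \<Rightarrow> bool \<Rightarrow> real" where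
  "do_prob M Y0 Y1 t y = measure M (ev M (\<lambda>\<omega>. (if t then Y1 \<omega> else Y0 \<omega>) = y))"

end

theory Submission
  imports Defs
begin

theorem theorem1:
  fixes M :: "'a measure"
    and T Yhat Y0 Y1 :: "'a \<Rightarrow> bool"
    and S :: "'a \<Rightarrow> 'b" and s :: "bool \<Rightarrow> 'b"
  assumes "prob_space M"
    and "T \<in> M \<rightarrow>\<^sub>M count_space UNIV"
    and "Yhat \<in> M \<rightarrow>\<^sub>M count_space UNIV"
    and "Y0 \<in> M \<rightarrow>\<^sub>M count_space UNIV"
    and "Y1 \<in> M \<rightarrow>\<^sub>M count_space UNIV"
    and "S \<in> M \<rightarrow>\<^sub>M count_space UNIV"
    \<comment> \<open>the event T = t entails the surface structure s(T=t)\<close>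
    and surf: "\<And>\<omega> t. \<omega> \<in> space M \<Longrightarrow> T \<omega> = t \<Longrightarrow> S \<omega> = s t"
    \<comment> \<open>consistency: observed outcome is the potential outcome under the received treatment\<close>
    and consist: "\<And>\<omega>. \<omega> \<in> space M \<Longrightarrow> Yhat \<omega> = (if T \<omega> then Y1 \<omega> else Y0 \<omega>)"
    \<comment> \<open>no confounding: P(Yhat = y | do(T=t)) = P(Yhat = y | T = t)\<close>
    and noconf: "\<And>t y. do_prob M Y0 Y1 t y = cprob M (\<lambda>\<omega>. Yhat \<omega> = y) (\<lambda>\<omega>. T \<omega> = t)"
    \<comment> \<open>monotonicity of Yhat in T (Tian--Pearl)\<close>
    and mono: "AE \<omega> in M. Y0 \<omega> \<longrightarrow> Y1 \<omega>"
    and half1: "measure M (ev M (\<lambda>\<omega>. T \<omega>)) = 1/2"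
    and half0: "measure M (ev M (\<lambda>\<omega>. \<not> T \<omega>)) = 1/2"
    and nz1: "measure M (ev M (\<lambda>\<omega>. T \<omega> \<and> S \<omega> = s True)) \<noteq> 0"
    and nz0: "measure M (ev M (\<lambda>\<omega>. \<not> T \<omega> \<and> S \<omega> = s False)) \<noteq> 0"
    and nzPS: "measure M (ev M (\<lambda>\<omega>. T \<omega> \<and> Yhat \<omega>)) \<noteq> 0"
    and nzPN: "measure M (ev M (\<lambda>\<omega>. \<not> T \<omega> \<and> \<not> Yhat \<omega>)) \<noteq> 0"
  shows
    "let
       dADCE = cprob M (\<lambda>\<omega>. Yhat \<omega>) (\<lambda>\<omega>. T \<omega> \<and> S \<omega> = s True)
             - cprob M (\<lambda>\<omega>. Yhat \<omega>) (\<lambda>\<omega>. \<not> T \<omega> \<and> S \<omega> = s False);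
       dPN = (measure M (ev M (\<lambda>\<omega>. \<not> Yhat \<omega>)) - do_prob M Y0 Y1 True False)
             / measure M (ev M (\<lambda>\<omega>. \<not> T \<omega> \<and> \<not> Yhat \<omega>));
       dPS = (do_prob M Y0 Y1 False False - measure M (ev M (\<lambda>\<omega>. \<not> Yhat \<omega>)))
             / measure M (ev M (\<lambda>\<omega>. T \<omega> \<and> Yhat \<omega>));
       \<alpha> = cprob M (\<lambda>\<omega>. Yhat \<omega>) (\<lambda>\<omega>. T \<omega> \<and> S \<omega> = s True);
       \<beta> = cprob M (\<lambda>\<omega>. \<not> Yhat \<omega>) (\<lambda>\<omega>. \<not> T \<omega> \<and> S \<omega> = s False)
     in dADCE = \<alpha> / 2 * dPS + \<beta> / 2 * dPN"
proof -
  interpret P: prob_space M by fact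
  have mT: "{\<omega>\<in>space M. T \<omega>} \<in> sets M"
    using measurable_sets[OF assms(2), of "{True}"] by (simp add: vimage_def Int_def conj_commute)
  have mY: "{\<omega>\<in>space M. Yhat \<omega>} \<in> sets M"
    using measurable_sets[OF assms(3), of "{True}"] by (simp add: vimage_def Int_def conj_commute)
  have mnT: "{\<omega>\<in>space M. \<not> T \<omega>} \<in> sets M" using mT
    by (metis (no_types, lifting) Collect_cong Diff_iff mem_Collect_eq sets.compl_sets sets.sets_Collect_neg)
  have mnY: "{\<omega>\<in>space M. \<not> Yhat \<omega>} \<in> sets M" using mY
    by (metis (no_types, lifting) Collect_cong Diff_iff mem_Collect_eq sets.compl_sets sets.sets_Collect_neg)
  define a where "a = measure M (ev M (\<lambda>\<omega>. T \<omega> \<and> Yhat \<omega>))"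
  define b where "b = measure M (ev M (\<lambda>\<omega>. T \<omega> \<and> \<not> Yhat \<omega>))"
  define c where "c = measure M (ev M (\<lambda>\<omega>. \<not> T \<omega> \<and> Yhat \<omega>))"
  define d where "d = measure M (ev M (\<lambda>\<omega>. \<not> T \<omega> \<and> \<not> Yhat \<omega>))"
  have split: "measure M (ev M A) = measure M (ev M (\<lambda>\<omega>. A \<omega> \<and> B \<omega>)) + measure M (ev M (\<lambda>\<omega>. A \<omega> \<and> \<not> B \<omega>))"
    if "ev M A \<in> sets M" "ev M B \<in> sets M" for A B
  proof -
    have "ev M (\<lambda>\<omega>. A \<omega> \<and> B \<omega>) = ev M A \<inter> ev M B" "ev M (\<lambda>\<omega>. A \<omega> \<and> \<not> B \<omega>) = ev M A - ev M B"
      "ev M A = (ev M A \<inter> ev M B) \<union> (ev M A - ev M B)"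
      by (auto simp: ev_def)
    then show ?thesis using that P.finite_measure_Union[of "ev M A \<inter> ev M B" "ev M A - ev M B"]
      by auto
  qed
  have eT: "ev M T \<in> sets M" and enT: "ev M (\<lambda>\<omega>. \<not> T \<omega>) \<in> sets M" and eY: "ev M Yhat \<in> sets M"
    and enY: "ev M (\<lambda>\<omega>. \<not> Yhat \<omega>) \<in> sets M"
    using mT mnT mY mnY by (simp_all add: ev_def)
  have ab: "a + b = 1/2" using split[OF eT eY] half1 a_def b_def by simp
  have cd: "c + d = 1/2" using split[OF enT eY] half0 c_def d_def by simp
  have Y0: "measure M (ev M (\<lambda>\<omega>. \<not> Yhat \<omega>)) = b + d"
    using split[OF enY eT] b_def d_def by (simp add: conj_commute)
  have s1: "\<And>Q. ev M (\<lambda>\<omega>. Q \<omega> \<and> T \<omega> \<and> S \<omega> = s True) = ev M (\<lambda>\<omega>. T \<omega> \<and> Q \<omega>)"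
    using surf by (auto simp: ev_def)
  have s1': "ev M (\<lambda>\<omega>. T \<omega> \<and> S \<omega> = s True) = ev M T"
    using surf by (auto simp: ev_def)
  have s0: "\<And>Q. ev M (\<lambda>\<omega>. Q \<omega> \<and> \<not> T \<omega> \<and> S \<omega> = s False) = ev M (\<lambda>\<omega>. \<not> T \<omega> \<and> Q \<omega>)"
    using surf by (auto simp: ev_def)
  have s0': "ev M (\<lambda>\<omega>. \<not> T \<omega> \<and> S \<omega> = s False) = ev M (\<lambda>\<omega>. \<not> T \<omega>)"
    using surf by (auto simp: ev_def)
  have alpha: "cprob M (\<lambda>\<omega>. Yhat \<omega>) (\<lambda>\<omega>. T \<omega> \<and> S \<omega> = s True) = 2 * a"
    unfolding cprob_def s1 s1' half1 a_def by simp
  have gam: "cprob M (\<lambda>\<omega>. Yhat \<omega>) (\<lambda>\<omega>. \<not> T \<omega> \<and> S \<omega> = s False) = 2 * c"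
    unfolding cprob_def s0 s0' half0 c_def by simp
  have beta: "cprob M (\<lambda>\<omega>. \<not> Yhat \<omega>) (\<lambda>\<omega>. \<not> T \<omega> \<and> S \<omega> = s False) = 2 * d"
    unfolding cprob_def s0 s0' half0 d_def by simp
  have do1: "do_prob M Y0 Y1 True False = 2 * b"
    unfolding noconf cprob_def by (simp add: conj_commute half1 b_def)
  have do0: "do_prob M Y0 Y1 False False = 2 * d"
    unfolding noconf cprob_def by (simp add: conj_commute half0 d_def)
  have an: "a \<noteq> 0" using nzPS a_def by simp
  have dn: "d \<noteq> 0" using nzPN d_def by simp
  show ?thesis
    unfolding Let_def alpha gam beta do1 do0 Y0 a_def[symmetric] d_def[symmetric]
    using an dn ab cd by (simp add: field_simps) algebra
qed

end
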